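(* Let $(a_i)_{i\ge0}$ be positive integers with $a_{2k}=1$ for all $k\geq0$ (the $a_{2k+1}$ arbitrary positive integers). Let $\ell$ be the irrational number with simple continued fraction $[a_0;a_1,a_2,\dots]$ and set $\theta=e^{2/\ell}$. Then $\mathcal A_\theta=\emptyset$. In particular, for every positive integer $c$, if $\theta=e^{-c+\sqrt{c(c+4)}}$ then $\mathcal A_\theta=\emptyset$.
   Context: $\lfloor x\rfloor$ is the floor of $x$; $\log$ is the natural logarithm. For real $\theta>1$ and positive integer $n$, $M'_\theta(n)=\left\lfloor 1/(\theta^{1/n}-1)\right\rfloor$, and $\mathcal A_\theta=\{n\in\mathbb N: M'_\theta(n)\neq \lfloor n/\log\theta-1/2\rfloor\}$, where $\mathbb N$ is the set of positive integers. $[a_0;a_1,a_2,\dots]$ denotes an infinite simple continued fraction. *)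

theory Defs
  imports Complex_Main
begin

fun cf_fin :: "(nat \<Rightarrow> nat) \<Rightarrow> nat \<Rightarrow> real" where
  "cf_fin a 0 = real (a 0)"
| "cf_fin a (Suc n) = real (a 0) + 1 / cf_fin (\<lambda>i. a (Suc i)) n"

definition M' :: "real \<Rightarrow> nat \<Rightarrow> int" where
  "M' \<theta> n = \<lfloor>1 / (\<theta> powr (1 / real n) - 1)\<rfloor>"

definition A_set :: "real \<Rightarrow> nat set" where
  "A_set \<theta> = {n. n \<ge> 1 \<and> M' \<theta> n \<noteq> \<lfloor>real n / ln \<theta> - 1/2\<rfloor>}"

end

theory Submission
  imports Defs
begin


lemma exp_strict: fixes x :: real assumes "x \<noteq> 0" shows "1 + x < exp x"
proof (cases "1 + x/2 < 0")
  case True then show ?thesis using exp_gt_zero[of x] by linarith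
next
  case False
  have "1 + x/2 \<le> exp (x/2)" by (rule exp_ge_add_one_self)
  then have "(1 + x/2)^2 \<le> exp (x/2) ^2" using False by (intro power_mono) auto
  also have "exp (x/2)^2 = exp x" by (simp add: power2_eq_square flip: exp_add)
  finally have "(1 + x/2)^2 \<le> exp x" .
  moreover have "x^2 > 0" using assms by simp
  ultimately show ?thesis by (simp add: power2_eq_square algebra_simps)
qed

lemma E1aux: fixes t :: real assumes "0 < t" shows "(2 - t) * exp t < 2 + t"
proof -
  let ?g = "\<lambda>x::real. (2 + x) - (2 - x) * exp x"
  have "?g 0 < ?g t"
  proof (rule DERIV_pos_imp_increasing_open[OF assms])
    fix x :: real assume x: "0 < x" "x < t"
    have "(?g has_real_derivative (1 - (1 - x) * exp x)) (at x)"
      by (auto intro!: derivative_eq_intros simp: algebra_simps)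
    moreover have "1 - (1 - x) * exp x > 0"
    proof (cases "x \<ge> 1")
      case True then have "(1 - x) * exp x \<le> 0" by (simp add: mult_nonpos_nonneg)
      then show ?thesis by linarith
    next
      case False
      have "1 + (-x) < exp (-x)" using x by (intro exp_strict) auto
      then have "(1 - x) * exp x < exp (-x) * exp x" using False by (intro mult_strict_right_mono) auto
      also have "\<dots> = 1" by (simp flip: exp_add)
      finally show ?thesis by linarith
    qed
    ultimately show "\<exists>y. (?g has_real_derivative y) (at x) \<and> 0 < y" by blast
  next
    show "continuous_on {0..t} ?g" by (intro continuous_intros)
  qed
  then show ?thesis by simp
qed

lemma E1: fixes t :: real assumes "0 < t" shows "1/t - 1/2 < 1 / (exp t - 1)"
proof -
  have ep: "exp t - 1 > 0" using assms by simp
  show ?thesis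
  proof (cases "t \<ge> 2")
    case True
    then have "1/t \<le> 1/2" by (simp add: divide_simps)
    moreover have "1 / (exp t - 1) > 0" using ep by simp
    ultimately show ?thesis by linarith
  next
    case False
    have "(2 - t) * (exp t - 1) < 2 * t" using E1aux[OF assms] by (simp add: algebra_simps)
    then have "(2 - t) / (2*t) < 1 / (exp t - 1)" using ep assms by (simp add: divide_simps)
    moreover have "1/t - 1/2 = (2 - t) / (2*t)" using assms by (simp add: field_simps)
    ultimately show ?thesis by simp
  qed
qed

lemma L1: fixes x :: real assumes "0 < x" shows "exp (-x) < 1 - x + x^2/2"
proof -
  let ?g = "\<lambda>x::real. 1 - x + x^2/2 - exp (-x)"
  have "?g 0 < ?g x"
  proof (rule DERIV_pos_imp_increasing_open[OF assms])
    fix y :: real assume y: "0 < y" "y < x"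
    have "(?g has_real_derivative (-1 + y + exp (-y))) (at y)"
      by (auto intro!: derivative_eq_intros simp: algebra_simps)
    moreover have "-1 + y + exp (-y) > 0" using exp_strict[of "-y"] y by auto
    ultimately show "\<exists>d. (?g has_real_derivative d) (at y) \<and> 0 < d" by blast
  next
    show "continuous_on {0..x} ?g" by (intro continuous_intros) auto
  qed
  then show ?thesis by simp
qed

lemma L2: fixes x :: real assumes "0 < x" shows "(x^2 - 2*x + 2) * exp x > 2"
proof -
  have "exp (-x) * exp x = 1" by (simp flip: exp_add)
  moreover have "exp (-x) * exp x < (1 - x + x^2/2) * exp x" using L1[OF assms] by simp
  ultimately show ?thesis by (simp add: algebra_simps)
qed

lemma L3: fixes t :: real assumes "0 < t" shows "(t^2 - 4*t + 6) * exp t - 2*t - 6 > 0"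
proof -
  let ?g = "\<lambda>x::real. (x^2 - 4*x + 6) * exp x - 2*x - 6"
  have "?g 0 < ?g t"
  proof (rule DERIV_pos_imp_increasing_open[OF assms])
    fix y :: real assume y: "0 < y" "y < t"
    have "(?g has_real_derivative ((y^2 - 2*y + 2) * exp y - 2)) (at y)"
      by (auto intro!: derivative_eq_intros simp: algebra_simps power2_eq_square)
    moreover have "(y^2 - 2*y + 2) * exp y - 2 > 0" using L2[OF y(1)] by auto
    ultimately show "\<exists>d. (?g has_real_derivative d) (at y) \<and> 0 < d" by blast
  next
    show "continuous_on {0..t} ?g" by (intro continuous_intros)
  qed
  then show ?thesis by simp
qed

lemma L4: fixes t :: real assumes "0 < t" shows "(t^2 - 6*t + 12) * exp t - (t^2 + 6*t + 12) > 0"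
proof -
  let ?g = "\<lambda>x::real. (x^2 - 6*x + 12) * exp x - (x^2 + 6*x + 12)"
  have "?g 0 < ?g t"
  proof (rule DERIV_pos_imp_increasing_open[OF assms])
    fix y :: real assume y: "0 < y" "y < t"
    have "(?g has_real_derivative ((y^2 - 4*y + 6) * exp y - 2*y - 6)) (at y)"
      by (auto intro!: derivative_eq_intros simp: algebra_simps power2_eq_square)
    moreover have "(y^2 - 4*y + 6) * exp y - 2*y - 6 > 0" using L3[OF y(1)] by auto
    ultimately show "\<exists>d. (?g has_real_derivative d) (at y) \<and> 0 < d" by blast
  next
    show "continuous_on {0..t} ?g" by (intro continuous_intros)
  qed
  then show ?thesis by simp
qed

lemma E2: fixes t :: real assumes "0 < t" shows "1 / (exp t - 1) < 1/t - 1/2 + t/12"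
proof -
  have ep: "exp t - 1 > 0" using assms by simp
  have q: "t^2 - 6*t + 12 > 0"
  proof -
    have "t^2 - 6*t + 12 = (t-3)^2 + 3" by (simp add: power2_eq_square algebra_simps)
    then show ?thesis by (smt (verit) zero_le_power2)
  qed
  have "12 * t < (t^2 - 6*t + 12) * (exp t - 1)" using L4[OF assms] by (simp add: algebra_simps)
  then have "1 / (exp t - 1) < (t^2 - 6*t + 12) / (12 * t)" using ep assms by (simp add: divide_simps)
  moreover have "1/t - 1/2 + t/12 = (t^2 - 6*t + 12) / (12 * t)" using assms by (simp add: field_simps power2_eq_square)
  ultimately show ?thesis by simp
qed






lemma T_gt1:
  fixes T :: "nat \<Rightarrow> real" and A :: "nat \<Rightarrow> nat"
  assumes pos: "\<forall>j. T j > 0" and A1: "\<forall>j. A j \<ge> 1"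
    and rec: "\<forall>j. T j = A j + 1/(1 + 1/T (Suc j))"
  shows "T j > 1"
proof -
  have "T (Suc j) > 0" using pos by auto
  then have "1/(1 + 1/T (Suc j)) > 0" by (simp add: add_pos_pos)
  moreover have "real (A j) \<ge> 1" using A1 by auto
  moreover have "T j = A j + 1/(1 + 1/T (Suc j))" using rec by blast
  ultimately show ?thesis by linarith
qed

lemma key:
  fixes T :: "nat \<Rightarrow> real" and A :: "nat \<Rightarrow> nat"
  assumes pos: "\<forall>j. T j > 0" and A1: "\<forall>j. A j \<ge> 1"
    and rec: "\<forall>j. T j = A j + 1/(1 + 1/T (Suc j))"
  shows "\<forall>j (n::int). 1 \<le> real_of_int n \<longrightarrow> real_of_int n < real r * T j \<longrightarrow> real_of_int n * (real r * T j - real_of_int n) > T j / 3"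
proof (induction r rule: less_induct)
  case (less r)
  show ?case
  proof (intro allI impI)
    fix j and n :: int
    assume n1: "1 \<le> real_of_int n" and nr: "real_of_int n < real r * T j"
    define y where "y = T j"
    define w where "w = T (Suc j)"
    define a where "a = real (A j)"
    have w1: "w > 1" unfolding w_def by (rule T_gt1[OF pos A1 rec])
    have a1: "a \<ge> 1" unfolding a_def using A1 by auto
    have yw: "y * (w+1) = a*(w+1) + w"
    proof -
      have "y = a + 1/(1 + 1/w)" unfolding y_def a_def w_def using rec by blast
      also have "1/(1+1/w) = w/(w+1)" using w1 by (simp add: field_simps)
      finally show ?thesis using w1 by (simp add: field_simps)
    qed
    have y0: "y > 0" unfolding y_def using pos by auto
    have r1: "real r \<ge> 1"
    proof -
      have "0 < real r * y" using nr n1 unfolding y_def by linarith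
      then have "real r > 0" using y0 by (simp add: zero_less_mult_iff)
      then have "r \<ge> 1" by simp
      then show ?thesis by simp
    qed
    define s where "s = n - int r * int (A j)"
    have sreal: "real_of_int s = n - real r * a" unfolding s_def a_def by simp
    have nn: "real_of_int n = real_of_int s + real r * a" using sreal by simp
    show "n * (real r * T j - n) > T j / 3"
      unfolding y_def[symmetric]
    proof (cases "s \<ge> 1")
      case True
      define m where "m = int r - s"
      have D: "(real r * y - n) * (w+1) = m * w - s"
      proof -
        have "(real r * y - n) * (w+1) = real r * (y*(w+1)) - n*(w+1)" by (simp add: algebra_simps)
        also have "\<dots> = real r * (a*(w+1)+w) - n*(w+1)" using yw by simp
        also have "\<dots> = m*w - s" unfolding m_def by (simp add: nn algebra_simps)
        finally show ?thesis .
      qed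
      have "(real r * y - n) * (w+1) > 0" using nr w1 unfolding y_def[symmetric] by simp
      then have Dpos: "m * w - s > 0" using D by simp
      have s1: "real_of_int s \<ge> 1" using True by simp
      have m1: "m \<ge> 1"
      proof -
        have "m * w > 0" using Dpos s1 by linarith
        then have "real_of_int m > 0" using w1 by (simp add: zero_less_mult_iff)
        then show ?thesis by simp
      qed
      have mr: "nat m < r" unfolding m_def using True m1 m_def by linarith
      have mnat: "real (nat m) = m" using m1 by simp
      have sl: "real_of_int s < real (nat m) * T (Suc j)" using Dpos mnat unfolding w_def by simp
      have IH: "s * (real (nat m) * w - s) > w / 3"
        using less.IH[OF mr, rule_format, OF s1 sl] unfolding w_def by simp
      define E where "E = m * w - s"
      have IH': "s * E > w/3" using IH mnat unfolding E_def by simp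
      have E0: "E > 0" using Dpos unfolding E_def .
      have "s * ((m + s) * E) > s * ((w+1)/3)"
      proof -
        have "s * ((w+1)/3) \<le> (m+s) * (w/3)" using Dpos by (simp add: algebra_simps)
        also have "\<dots> < (m + s) * (s * E)" using IH' m1 s1 by (intro mult_strict_left_mono) auto
        also have "\<dots> = s * ((m + s) * E)" by (simp add: algebra_simps)
        finally show ?thesis .
      qed
      then have ms: "(m + s) * E > (w+1)/3" using s1 by (simp add: mult_less_cancel_left_pos)
      have nE: "n * E = s * E + a * ((m+s) * E)"
        unfolding m_def by (simp add: nn algebra_simps)
      have "a * ((m+s) * E) \<ge> a * ((w+1)/3)" using ms a1 by (intro mult_left_mono) auto
      then have "n * E > (a*(w+1) + w) / 3" using nE IH' by (simp add: algebra_simps)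
      moreover have "(n * (real r * y - n)) * (w+1) = n * E" using D unfolding E_def by (simp add: mult.assoc)
      moreover have "(y / 3) * (w+1) = (a*(w+1) + w) / 3" using yw by (simp add: field_simps)
      ultimately have "(y / 3) * (w+1) < (n * (real r * y - n)) * (w+1)" by linarith
      from mult_right_less_imp_less[OF this] w1 show "n * (real r * y - n) > y / 3" by simp
    next
      case False
      have sle: "real_of_int n \<le> real r * a" using False sreal by linarith
      define C where "C = real r * y"
      have yhalf: "y > 3/2"
      proof -
        have "w / (w+1) > 1/2" using w1 by (simp add: field_simps)
        moreover have "y = a + w/(w+1)" using yw w1 by (simp add: field_simps)
        ultimately show ?thesis using a1 by linarith
      qed
      show "n * (real r * y - n) > y / 3"
      proof (cases "real_of_int n \<le> C - 1")
        case True
        have "n * (C - n) - (C - 1) = (n - 1) * (C - 1 - n)" by (simp add: algebra_simps)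
        also have "\<dots> \<ge> 0" using True n1 by simp
        finally have "n * (C - n) \<ge> C - 1" by simp
        moreover have "C \<ge> y" unfolding C_def using r1 y0 by simp
        ultimately show ?thesis unfolding C_def using yhalf by linarith
      next
        case False
        define N where "N = real r * a"
        have N1: "N \<ge> 1" unfolding N_def using mult_mono[of 1 "real r" 1 a] r1 a1 by simp
        have "n * (C - n) - N * (C - N) = (N - n) * (N + n - C)" by (simp add: algebra_simps)
        also have "\<dots> \<ge> 0" using False sle N1 unfolding N_def by simp
        finally have ge: "n * (C - n) \<ge> N * (C - N)" by simp
        have "N * (C - N) = (real r * real r) * (a * (y - a))" unfolding N_def C_def by (simp add: algebra_simps)
        also have "y - a = w/(w+1)" using yw w1 by (simp add: field_simps)
        also have "(real r * real r) * (a * (w/(w+1))) \<ge> a * (w/(w+1))"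
        proof -
          have "real r * real r \<ge> 1" using mult_mono[of 1 "real r" 1 "real r"] r1 by simp
          moreover have "a * (w/(w+1)) \<ge> 0" using a1 w1 by simp
          ultimately have "1 * (a * (w/(w+1))) \<le> (real r * real r) * (a * (w/(w+1)))"
            by (intro mult_right_mono) auto
          then show ?thesis by simp
        qed
        finally have ge2: "N * (C - N) \<ge> a * (w/(w+1))" .
        have "a * (w/(w+1)) > y / 3"
        proof -
          have "a*(w-1) > 0" using a1 w1 by simp
          moreover have "w*(a-1) \<ge> 0" using a1 w1 by simp
          ultimately have "2*a*w > a + w" by (simp add: algebra_simps)
          then have "3*(a*w) > a*(w+1) + w" by (simp add: algebra_simps)
          then have "3*(a*w) > y*(w+1)" using yw by simp
          then show ?thesis using w1 by (simp add: field_simps)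
        qed
        then show ?thesis using ge ge2 unfolding C_def by linarith
      qed
    qed
  qed
qed


lemma cf_bounds: "(\<forall>i. a i > 0) \<Longrightarrow> real (a 0) \<le> cf_fin a n \<and> cf_fin a n \<le> real (a 0) + 1"
proof (induction n arbitrary: a)
  case 0
  then show ?case by simp
next
  case (Suc n)
  have "\<forall>i. (\<lambda>i. a (Suc i)) i > 0" using Suc.prems by auto
  from Suc.IH[OF this] have h: "real (a 1) \<le> cf_fin (\<lambda>i. a (Suc i)) n" by simp
  have "a 1 \<ge> 1" using Suc.prems by (simp add: Suc_le_eq)
  then have "real (a 1) \<ge> 1" by simp
  then have g1: "cf_fin (\<lambda>i. a (Suc i)) n \<ge> 1" using h by linarith
  then have "0 \<le> 1 / cf_fin (\<lambda>i. a (Suc i)) n" "1 / cf_fin (\<lambda>i. a (Suc i)) n \<le> 1" by auto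
  then show ?case by simp
qed

lemma cf_shift:
  assumes pos: "\<forall>i. a i > 0" and lim: "(\<lambda>n. cf_fin a n) \<longlonglongrightarrow> L"
  shows "\<exists>L'. (\<lambda>n. cf_fin (\<lambda>i. a (Suc i)) n) \<longlonglongrightarrow> L' \<and> L = real (a 0) + 1/L' \<and> L' \<ge> 1"
proof -
  define u where "u n = cf_fin (\<lambda>i. a (Suc i)) n" for n
  have pos': "\<forall>i. (\<lambda>i. a (Suc i)) i > 0" using pos by auto
  have ub: "u n \<le> real (a 1) + 1" for n using cf_bounds[OF pos', of n] unfolding u_def by simp
  have lb: "u n \<ge> 1" for n
  proof -
    have "a 1 \<ge> 1" using pos by (simp add: Suc_le_eq)
    then have "real (a 1) \<ge> 1" by simp
    then show ?thesis using cf_bounds[OF pos', of n] unfolding u_def by simp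
  qed
  have "(\<lambda>n. cf_fin a (Suc n)) \<longlonglongrightarrow> L" using lim by (rule LIMSEQ_Suc)
  then have "(\<lambda>n. real (a 0) + 1 / u n) \<longlonglongrightarrow> L" unfolding u_def by simp
  then have "(\<lambda>n. (real (a 0) + 1 / u n) - real (a 0)) \<longlonglongrightarrow> L - real (a 0)"
    by (intro tendsto_intros)
  then have inv: "(\<lambda>n. 1 / u n) \<longlonglongrightarrow> L - real (a 0)" by simp
  have "1 / (real (a 1) + 1) \<le> L - real (a 0)"
  proof (rule LIMSEQ_le_const[OF inv], intro exI allI impI)
    fix n show "1 / (real (a 1) + 1) \<le> 1 / u n"
      using lb[of n] ub[of n] by (intro divide_left_mono) auto
  qed
  moreover have "1 / (real (a 1) + 1) > 0" by simp
  ultimately have Lp: "L - real (a 0) > 0" by linarith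
  have "(\<lambda>n. inverse (1 / u n)) \<longlonglongrightarrow> inverse (L - real (a 0))"
    using inv Lp by (intro tendsto_inverse) auto
  then have conv: "u \<longlonglongrightarrow> 1 / (L - real (a 0))" by (simp add: inverse_eq_divide)
  have ueq: "u = (\<lambda>n. cf_fin (\<lambda>i. a (Suc i)) n)" by (rule ext) (simp add: u_def)
  have ge: "1 / (L - real (a 0)) \<ge> 1"
    by (rule LIMSEQ_le_const[OF conv]) (use lb in auto)
  show ?thesis
    by (rule exI[of _ "1 / (L - real (a 0))"]) (use conv ge Lp ueq in auto)
qed

lemma tails:
  assumes pos: "\<forall>i. a i > 0" and lim: "(\<lambda>n. cf_fin a n) \<longlonglongrightarrow> l"
  shows "\<exists>t. t 0 = l \<and> (\<forall>k. t k = real (a k) + 1 / t (Suc k) \<and> t (Suc k) \<ge> 1)"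
proof -
  have ex: "\<exists>L. (\<lambda>n. cf_fin (\<lambda>i. a (i + k)) n) \<longlonglongrightarrow> L" for k
  proof (induction k)
    case 0 then show ?case using lim by auto
  next
    case (Suc k)
    then obtain L where "(\<lambda>n. cf_fin (\<lambda>i. a (i + k)) n) \<longlonglongrightarrow> L" by blast
    from cf_shift[OF _ this] pos obtain L' where "(\<lambda>n. cf_fin (\<lambda>i. a (Suc i + k)) n) \<longlonglongrightarrow> L'" by auto
    then show ?case by auto
  qed
  define t where "t k = lim (\<lambda>n. cf_fin (\<lambda>i. a (i + k)) n)" for k
  have tl: "(\<lambda>n. cf_fin (\<lambda>i. a (i + k)) n) \<longlonglongrightarrow> t k" for k
  proof -
    obtain L where "(\<lambda>n. cf_fin (\<lambda>i. a (i + k)) n) \<longlonglongrightarrow> L" using ex[of k] by blast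
    then have "convergent (\<lambda>n. cf_fin (\<lambda>i. a (i + k)) n)" by (rule convergentI)
    then show ?thesis unfolding t_def by (simp add: convergent_LIMSEQ_iff)
  qed
  have "t 0 = l" using tl[of 0] lim LIMSEQ_unique by auto
  moreover have "t k = real (a k) + 1 / t (Suc k) \<and> t (Suc k) \<ge> 1" for k
  proof -
    have "\<forall>i. (\<lambda>i. a (i + k)) i > 0" using pos by auto
    from cf_shift[OF this tl[of k]] obtain L' where
      L': "(\<lambda>n. cf_fin (\<lambda>i. a (Suc i + k)) n) \<longlonglongrightarrow> L'" "t k = real (a k) + 1/L'" "L' \<ge> 1" by auto
    have "L' = t (Suc k)" using L'(1) tl[of "Suc k"] LIMSEQ_unique by auto
    then show ?thesis using L' by auto
  qed
  ultimately show ?thesis by blast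
qed

lemma floor_step:
  fixes n :: nat and l :: real and T0 :: real
  assumes n1: "n \<ge> 1" and l1: "l > 1" and T0: "T0 > 0" and lT: "l = 1 + 1/T0"
    and K: "\<And>(r::nat) (n::int). 1 \<le> real_of_int n \<Longrightarrow> real_of_int n < real r * T0 \<Longrightarrow> n * (real r * T0 - n) > T0 / 3"
  shows "M' (exp (2/l)) n = \<lfloor>real n / ln (exp (2/l)) - 1/2\<rfloor>"
proof -
  define y where "y = real n * l / 2"
  have y0: "y > 0" unfolding y_def using n1 l1 by simp
  define t where "t = 1 / y"
  have t0: "t > 0" using y0 unfolding t_def by simp
  have pw: "exp (2/l) powr (1 / real n) = exp t"
    unfolding t_def y_def powr_def using n1 by (simp add: field_simps)
  have lnq: "real n / ln (exp (2/l)) = y" unfolding y_def by simp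
  define F where "F = 1 / (exp t - 1)"
  have lo: "y - 1/2 < F" using E1[OF t0] unfolding F_def t_def using y0 by simp
  have hi: "F < y - 1/2 + 1/(12*y)" using E2[OF t0] unfolding F_def t_def using y0 by simp
  have "\<lfloor>F\<rfloor> = \<lfloor>y - 1/2\<rfloor>"
  proof (rule ccontr)
    assume ne: "\<lfloor>F\<rfloor> \<noteq> \<lfloor>y - 1/2\<rfloor>"
    have "\<lfloor>y - 1/2\<rfloor> \<le> \<lfloor>F\<rfloor>" using lo by (intro floor_mono) simp
    then have lt: "\<lfloor>y - 1/2\<rfloor> + 1 \<le> \<lfloor>F\<rfloor>" using ne by linarith
    define m where "m = \<lfloor>F\<rfloor>"
    have mF: "real_of_int m \<le> F" unfolding m_def by simp
    have h2: "real_of_int (\<lfloor>y - 1/2\<rfloor> + 1) \<le> real_of_int m" using lt unfolding m_def by (simp only: of_int_le_iff)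
    have h1: "y - 1/2 < real_of_int (\<lfloor>y - 1/2\<rfloor> + 1)" using floor_correct by blast
    have my: "real_of_int m > y - 1/2" using h1 h2 by linarith
    define q where "q = 2 * m + 1"
    have qpos: "q - real n * l > 0" using my unfolding q_def y_def by simp
    have qsmall: "q - real n * l < 1 / (3 * (real n * l))"
    proof -
      have "q - real n * l \<le> 2 * F + 1 - 2 * y" using mF unfolding q_def y_def by simp
      also have "\<dots> < 2 * (1 / (12 * y))" using hi by simp
      also have "2 * (1 / (12 * y)) = 1 / (3 * (real n * l))" unfolding y_def by simp
      finally show ?thesis .
    qed
    define r where "r = q - int n"
    have nl: "real n * l = real n + real n / T0" using lT by (simp add: algebra_simps)
    have rT: "(real_of_int r * T0 - real n) / T0 = q - real n * l"
      unfolding r_def using nl T0 by (simp add: field_simps)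
    have rpos: "real_of_int r > 0"
    proof -
      have "real n / T0 \<ge> 0" using T0 by simp
      then show ?thesis using qpos nl unfolding r_def by simp
    qed
    have rnat: "real (nat r) = real_of_int r" using rpos by simp
    have lt2: "real_of_int (int n) < real (nat r) * T0"
    proof -
      have "(real_of_int r * T0 - real n) / T0 > 0" using rT qpos by simp
      then have "real_of_int r * T0 - real n > 0" using T0 by (simp add: zero_less_divide_iff)
      then show ?thesis using rnat by simp
    qed
    have "real_of_int (int n) * (real (nat r) * T0 - real_of_int (int n)) > T0 / 3"
      by (rule K) (use n1 lt2 rnat in auto)
    then have "real n * (real_of_int r * T0 - real n) > T0 / 3" using rnat by simp
    then have "real n * ((real_of_int r * T0 - real n) / T0) > 1/3" using T0
      by (simp add: field_simps)
    then have A1: "real n * (q - real n * l) > 1/3" using rT by simp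
    have "real n * (q - real n * l) \<le> (real n * l) * (q - real n * l)"
      using l1 qpos by (intro mult_right_mono) (auto simp: mult_le_cancel_left1)
    also have "\<dots> < (real n * l) * (1 / (3 * (real n * l)))"
      using qsmall y0 unfolding y_def by (intro mult_strict_left_mono) auto
    also have "\<dots> = 1/3" using n1 l1 by simp
    finally show False using A1 by simp
  qed
  then show ?thesis unfolding M'_def pw lnq F_def .
qed

lemma main_T:
  fixes T :: "nat \<Rightarrow> real" and A :: "nat \<Rightarrow> nat"
  assumes pos: "\<forall>j. T j > 0" and A1: "\<forall>j. A j \<ge> 1"
    and rec: "\<forall>j. T j = A j + 1/(1 + 1/T (Suc j))" and lT: "l = 1 + 1 / T 0"
  shows "A_set (exp (2/l)) = {}"
proof -
  have T0: "T 0 > 0" using pos by auto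
  have l1: "l > 1" using lT T0 by simp
  have K: "\<And>(r::nat) (n::int). 1 \<le> real_of_int n \<Longrightarrow> real_of_int n < real r * T 0 \<Longrightarrow> n * (real r * T 0 - n) > T 0 / 3"
  proof -
    fix r :: nat and n :: int
    assume "1 \<le> real_of_int n" "real_of_int n < real r * T 0"
    moreover have "\<forall>j (n::int). 1 \<le> real_of_int n \<longrightarrow> real_of_int n < real r * T j \<longrightarrow> real_of_int n * (real r * T j - real_of_int n) > T j / 3"
      by (rule key[OF pos A1 rec])
    ultimately show "n * (real r * T 0 - n) > T 0 / 3" by blast
  qed
  show ?thesis unfolding A_set_def using floor_step[OF _ l1 T0 lT K] by auto
qed

theorem theorem5:
  shows "(\<forall>(a :: nat \<Rightarrow> nat) (l :: real).
            (\<forall>i. a i > 0) \<longrightarrow> (\<forall>k. a (2 * k) = 1) \<longrightarrow>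
            (\<lambda>n. cf_fin a n) \<longlonglongrightarrow> l \<longrightarrow>
            A_set (exp (2 / l)) = {})
       \<and> (\<forall>(c :: nat) (\<theta> :: real). c > 0 \<longrightarrow>
            \<theta> = exp (- real c + sqrt (real c * (real c + 4))) \<longrightarrow> A_set \<theta> = {})"
proof (intro conjI allI impI)
  fix a :: "nat \<Rightarrow> nat" and l :: real
  assume pos: "\<forall>i. a i > 0" and ev: "\<forall>k. a (2 * k) = 1" and lim: "(\<lambda>n. cf_fin a n) \<longlonglongrightarrow> l"
  obtain t where t0: "t 0 = l" and tr: "\<And>k. t k = real (a k) + 1 / t (Suc k)" and tg: "\<And>k. t (Suc k) \<ge> 1"
    using tails[OF pos lim] by blast
  define T where "T j = t (Suc (2 * j))" for j
  define A where "A j = a (Suc (2 * j))" for j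
  show "A_set (exp (2 / l)) = {}"
  proof (rule main_T[of T A])
    show "\<forall>j. T j > 0"
    proof
      fix j show "T j > 0" unfolding T_def using tg[of "2*j"] by linarith
    qed
    show "\<forall>j. A j \<ge> 1" unfolding A_def using pos by (simp add: Suc_le_eq)
    show "\<forall>j. T j = A j + 1/(1 + 1/T (Suc j))"
    proof
      fix j
      have "t (Suc (Suc (2*j))) = real (a (2 * Suc j)) + 1 / t (Suc (2 * Suc j))"
        using tr[of "Suc (Suc (2*j))"] by simp
      also have "a (2 * Suc j) = 1" using ev by blast
      finally have "t (Suc (Suc (2*j))) = 1 + 1 / T (Suc j)" unfolding T_def by simp
      then show "T j = A j + 1/(1 + 1/T (Suc j))" unfolding T_def A_def using tr[of "Suc (2*j)"] by simp
    qed
    show "l = 1 + 1 / T 0" using tr[of 0] t0 ev[rule_format, of 0] unfolding T_def by simp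
  qed
next
  fix c :: nat and \<theta> :: real
  assume c0: "c > 0" and th: "\<theta> = exp (- real c + sqrt (real c * (real c + 4)))"
  define S where "S = sqrt (real c * (real c + 4))"
  have S0: "S \<ge> 0" unfolding S_def by simp
  have S2: "S^2 = real c * (real c + 4)" unfolding S_def by simp
  define \<beta> where "\<beta> = (real c + S) / 2"
  have b0: "\<beta> > 0" unfolding \<beta>_def using c0 S0 by simp
  have bq: "\<beta> * (\<beta> + 1) = real c * (\<beta> + 1) + \<beta>"
    unfolding \<beta>_def using S2 by (simp add: algebra_simps power2_eq_square)
  have rec: "\<forall>j. (\<lambda>_. \<beta>) j = real ((\<lambda>_. c) j) + 1/(1 + 1/(\<lambda>_. \<beta>) (Suc j))"
  proof
    fix j
    have "1/(1 + 1/\<beta>) = \<beta> / (\<beta> + 1)" using b0 by (simp add: field_simps)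
    moreover have "\<beta> = real c + \<beta> / (\<beta> + 1)" using bq b0 by (simp add: field_simps)
    ultimately show "(\<lambda>_. \<beta>) j = real ((\<lambda>_. c) j) + 1/(1 + 1/(\<lambda>_. \<beta>) (Suc j))" by simp
  qed
  have "A_set (exp (2 / (1 + 1/\<beta>))) = {}"
  proof (rule main_T[of "\<lambda>_. \<beta>" "\<lambda>_. c"])
    show "\<forall>j. (\<lambda>_. \<beta>) j > 0" using b0 by simp
    show "\<forall>j. (\<lambda>_. c) j \<ge> 1" using c0 by simp
    show "\<forall>j. (\<lambda>_. \<beta>) j = real ((\<lambda>_. c) j) + 1/(1 + 1/(\<lambda>_. \<beta>) (Suc j))" by (rule rec)
  qed simp
  moreover have "2 / (1 + 1/\<beta>) = - real c + S"
  proof -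
    have "(S - real c) * (\<beta> + 1) = 2 * \<beta>" unfolding \<beta>_def using S2 by (simp add: algebra_simps power2_eq_square)
    then show ?thesis using b0 by (simp add: field_simps)
  qed
  ultimately show "A_set \<theta> = {}" using th unfolding S_def by simp
qed

end
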